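(* Let $\mathbb{L}=(\mathcal{P},\mathcal{C},\parallel)$ be a Laguerre plane satisfying axioms (C) and (S). If $K,L,M,N$ are circles and $a,b,c,d$ are points such that $K\cap L=\{a\}$, $L\cap M=\{b\}$, $M\cap N=\{c\}$, $N\cap K=\{d\}$, then $(a,c,b,d)_{\triangle}$.
   Context: A Laguerre plane is a triple $(\mathcal{P},\mathcal{C},\parallel)$ where $\mathcal{P}$ is a set of points, $\mathcal{C}\subset 2^{\mathcal{P}}$ a set of circles and $\parallel$ an equivalence relation on $\mathcal{P}$ (parallelism; its classes are called generators) such that: (1) any three pairwise non-parallel points lie on a unique circle; (2) for every circle $K$ and non-parallel points $p\in K$, $q\notin K$ there is exactly one circle $L$ with $q\in L$ and $K\cap L=\{p\}$; (3) for every point $p$ and circle $K$ there is exactly one point $q\in K$ with $q\parallel p$; (4) some circle contains at least three but not all points. Circles $K,L$ are tangent at $p$ if $K\cap L=\{p\}$ or $K=L$ (with $p\in K$). For $p\in K$, $\langle p,K\rangle$ denotes the set of circles tangent to $K$ at $p$. Axiom (C): for any circles $K,L$ and any point $p\in K\setminus L$ there exists exactly one circle $M\in\langle p,K\rangle$ with $|M\cap L|=1$. Axiom (S): if $K,L,M,N$ are circles and $a,b,c,d$ points with $K\cap L=\{a\}$, $L\cap M=\{b\}$, $M\cap N=\{c\}$, $N\cap K=\{d\}$ and $a\nparallel c$, then there is a circle containing $a,b,c,d$. A quadruple $(a,b,c,d)$ of points is concyclic, written $(a,b,c,d)_{\triangle}$, if $a,b,c,d$ lie on a common circle, or $a\parallel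 b$, $c\parallel d$ and $a\nparallel c$. *)

theory Defs
  imports Main
begin

definition laguerre_plane :: "'p set \<Rightarrow> 'p set set \<Rightarrow> ('p \<Rightarrow> 'p \<Rightarrow> bool) \<Rightarrow> bool" where
  "laguerre_plane P C par \<longleftrightarrow>
     (\<forall>K\<in>C. K \<subseteq> P) \<and>
     equiv P {(x, y). x \<in> P \<and> y \<in> P \<and> par x y} \<and>
     (\<forall>x y. par x y \<longrightarrow> x \<in> P \<and> y \<in> P) \<and>
     \<comment> \<open>(1)\<close>
     (\<forall>p\<in>P. \<forall>q\<in>P. \<forall>r\<in>P. \<not> par p q \<and> \<not> par q r \<and> \<not> par p r \<longrightarrow>
        (\<exists>!K. K \<in> C \<and> p \<in> K \<and> q \<in> K \<and> r \<in> K)) \<and>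
     \<comment> \<open>(2)\<close>
     (\<forall>K\<in>C. \<forall>p\<in>K. \<forall>q\<in>P. q \<notin> K \<and> \<not> par p q \<longrightarrow>
        (\<exists>!L. L \<in> C \<and> q \<in> L \<and> K \<inter> L = {p})) \<and>
     \<comment> \<open>(3)\<close>
     (\<forall>p\<in>P. \<forall>K\<in>C. \<exists>!q. q \<in> K \<and> par q p) \<and>
     \<comment> \<open>(4)\<close>
     (\<exists>K\<in>C. (\<exists>x y z. x \<in> K \<and> y \<in> K \<and> z \<in> K \<and> x \<noteq> y \<and> y \<noteq> z \<and> x \<noteq> z) \<and> K \<noteq> P)"

definition tangent_at :: "'p set \<Rightarrow> 'p set \<Rightarrow> 'p \<Rightarrow> bool" where
  "tangent_at K L p \<longleftrightarrow> K \<inter> L = {p} \<or> (K = L \<and> p \<in> K)"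

definition tangent_pencil :: "'p set set \<Rightarrow> 'p \<Rightarrow> 'p set \<Rightarrow> 'p set set" where
  "tangent_pencil C p K = {M \<in> C. tangent_at M K p}"

definition axiom_C :: "'p set \<Rightarrow> 'p set set \<Rightarrow> ('p \<Rightarrow> 'p \<Rightarrow> bool) \<Rightarrow> bool" where
  "axiom_C P C par \<longleftrightarrow>
     (\<forall>K\<in>C. \<forall>L\<in>C. \<forall>p. p \<in> K \<and> p \<notin> L \<longrightarrow>
        (\<exists>!M. M \<in> tangent_pencil C p K \<and> card (M \<inter> L) = 1))"

definition axiom_S :: "'p set \<Rightarrow> 'p set set \<Rightarrow> ('p \<Rightarrow> 'p \<Rightarrow> bool) \<Rightarrow> bool" where
  "axiom_S P C par \<longleftrightarrow>
     (\<forall>K\<in>C. \<forall>L\<in>C. \<forall>M\<in>C. \<forall>N\<in>C. \<forall>a b c d.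
        K \<inter> L = {a} \<and> L \<inter> M = {b} \<and> M \<inter> N = {c} \<and> N \<inter> K = {d} \<and> \<not> par a c \<longrightarrow>
        (\<exists>Z\<in>C. a \<in> Z \<and> b \<in> Z \<and> c \<in> Z \<and> d \<in> Z))"

definition concyclic :: "'p set set \<Rightarrow> ('p \<Rightarrow> 'p \<Rightarrow> bool) \<Rightarrow> 'p \<Rightarrow> 'p \<Rightarrow> 'p \<Rightarrow> 'p \<Rightarrow> bool" where
  "concyclic C par a b c d \<longleftrightarrow>
     (\<exists>Z\<in>C. a \<in> Z \<and> b \<in> Z \<and> c \<in> Z \<and> d \<in> Z) \<or>
     (par a b \<and> par c d \<and> \<not> par a c)"

end

theory Submission
  imports Defs
begin

lemma lp_equiv: "laguerre_plane P C par \<Longrightarrow> equiv P {(x, y). x \<in> P \<and> y \<in> P \<and> par x y}"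
  unfolding laguerre_plane_def by (elim conjE)

lemma lp_parP: "laguerre_plane P C par \<Longrightarrow> par x y \<Longrightarrow> x \<in> P \<and> y \<in> P"
  unfolding laguerre_plane_def by (elim conjE) blast

lemma lp_par_refl: assumes "laguerre_plane P C par" "x \<in> P" shows "par x x"
  using lp_equiv[OF assms(1)] assms(2) unfolding equiv_def refl_on_def by blast

lemma lp_par_sym: assumes "laguerre_plane P C par" "par x y" shows "par y x"
proof -
  have "x \<in> P" "y \<in> P" using lp_parP[OF assms] by auto
  then show ?thesis using lp_equiv[OF assms(1)] assms(2) unfolding equiv_def sym_def by blast
qed

lemma lp_par_trans: assumes "laguerre_plane P C par" "par x y" "par y z" shows "par x z"
proof -
  have "x \<in> P" "y \<in> P" "z \<in> P" using lp_parP[OF assms(1,2)] lp_parP[OF assms(1,3)] by auto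
  then show ?thesis using lp_equiv[OF assms(1)] assms(2,3) unfolding equiv_def trans_def by blast
qed

lemma lp_sub: "laguerre_plane P C par \<Longrightarrow> K \<in> C \<Longrightarrow> K \<subseteq> P"
  unfolding laguerre_plane_def by (elim conjE) blast

lemma lp_3: "laguerre_plane P C par \<Longrightarrow> \<forall>p\<in>P. \<forall>K\<in>C. \<exists>!q. q \<in> K \<and> par q p"
  unfolding laguerre_plane_def by (elim conjE)

lemma lp_unique: "laguerre_plane P C par \<Longrightarrow> K \<in> C \<Longrightarrow> x \<in> K \<Longrightarrow> y \<in> K \<Longrightarrow> par x y \<Longrightarrow> x = y"
proof -
  assume lp: "laguerre_plane P C par" and K: "K \<in> C" "x \<in> K" "y \<in> K" "par x y"
  have xP: "x \<in> P" using lp_sub[OF lp K(1)] K(2) by blast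
  have "\<exists>!q. q \<in> K \<and> par q x" using lp_3[OF lp] xP K(1) by blast
  moreover have "par x x" using lp_par_refl[OF lp xP] .
  moreover have "par y x" using lp_par_sym[OF lp K(4)] .
  ultimately show "x = y" using K by blast
qed

lemma S_use:
  assumes "axiom_S P C par" "K \<in> C" "L \<in> C" "M \<in> C" "N \<in> C"
    "K \<inter> L = {a}" "L \<inter> M = {b}" "M \<inter> N = {c}" "N \<inter> K = {d}" "\<not> par a c"
  shows "\<exists>Z\<in>C. a \<in> Z \<and> b \<in> Z \<and> c \<in> Z \<and> d \<in> Z"
proof -
  have "\<forall>a b c d. K \<inter> L = {a} \<and> L \<inter> M = {b} \<and> M \<inter> N = {c} \<and> N \<inter> K = {d} \<and> \<not> par a c \<longrightarrow>
        (\<exists>Z\<in>C. a \<in> Z \<and> b \<in> Z \<and> c \<in> Z \<and> d \<in> Z)"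
    using assms(1) assms(2-5) unfolding axiom_S_def by simp
  then show ?thesis using assms(6-10) by simp
qed

theorem corollary2p1:
  fixes P :: "'p set" and C :: "'p set set" and par :: "'p \<Rightarrow> 'p \<Rightarrow> bool"
  assumes "laguerre_plane P C par" and "axiom_C P C par" and "axiom_S P C par"
    and "K \<in> C" and "L \<in> C" and "M \<in> C" and "N \<in> C"
    and "K \<inter> L = {a}" and "L \<inter> M = {b}" and "M \<inter> N = {c}" and "N \<inter> K = {d}"
  shows "concyclic C par a c b d"
proof (cases "par a c")
  case False
  then obtain Z where "Z \<in> C" "a \<in> Z" "b \<in> Z" "c \<in> Z" "d \<in> Z"
    using S_use[OF assms(3,4,5,6,7,8,9,10,11)] by blast
  then show ?thesis unfolding concyclic_def by blast
next
  case ac: True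
  show ?thesis
  proof (cases "par b d")
    case False
    obtain Z where "Z \<in> C" "a \<in> Z" "b \<in> Z" "c \<in> Z" "d \<in> Z"
      using S_use[OF assms(3,5,6,7,4,9,10,11,8) False] by blast
    then show ?thesis unfolding concyclic_def by blast
  next
    case bd: True
    show ?thesis
    proof (cases "par a b")
      case False
      then show ?thesis using ac bd unfolding concyclic_def by blast
    next
      case ab: True
      have "a = b" using lp_unique[OF assms(1) assms(5) _ _ ab] assms(8,9) by blast
      moreover have "par b c" using lp_par_trans[OF assms(1) lp_par_sym[OF assms(1) ab] ac] .
      then have "b = c" using lp_unique[OF assms(1) assms(6)] assms(9,10) by blast
      moreover have "par c d" using lp_par_trans[OF assms(1) lp_par_sym[OF assms(1) \<open>par b c\<close>] bd] .
      then have "c = d" using lp_unique[OF assms(1) assms(7)] assms(10,11) by blast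
      ultimately show ?thesis using assms(4,8) unfolding concyclic_def by blast
    qed
  qed
qed

end
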